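(* Let $N$ be the $t$-th power of a positive integer. Assume that for some $C$ and $D$, for every integer $0 \le c < t$, there is a bipartite graph with $C N^{(c+1)/t}$ left nodes, at most $C N^{c/t}$ right nodes, left degree at most $D$, and dynamic matching up to $N^{c/t}$. Then there exists an $N$-connector of depth $t$ with at most $tCD N^{1+1/t}$ edges.
   Context: Dynamic matching up to $K$: in the following game Matcher has a strategy with which she never loses. Requester and Matcher alternate (Requester starts), maintaining a set $M$ of edges, initially empty; Requester removes zero or more edges so that $\#M\le K-1$ and selects a left node $x$; Matcher adds an edge, after which $x$ must be incident to an edge of $M$ and each right node to at most one edge of $M$. An $N$-network is a directed acyclic graph with $N$ designated input nodes and $N$ designated output nodes; its depth is the length of the longest input-to-output path. Connection game: Requester and Connector alternate (Requester starts), maintaining a set of node-disjoint trees, each with an input as root and outputs as leaves, initially empty. Requester removes zero or more trees and may then select an input $x$ and an output $y$ lying on no tree; Connector may create or extend a tree (keeping trees node-disjoint), after which some tree must have root $x$ and leaf $y$. An $N$-connector is an $N$-network in which Connector has a strategy with which she never fails. *)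

theory Defs
  imports Complex_Main
begin

text \<open>A bipartite graph is given by a set L of left nodes, a set R of right nodes and
  an edge set E \<subseteq> L \<times> R (nodes are natural numbers; left and right nodes are
  distinguished by the position in the pair).\<close>

definition bipartite :: "nat set \<Rightarrow> nat set \<Rightarrow> (nat \<times> nat) set \<Rightarrow> bool" where
  "bipartite L R E \<longleftrightarrow> finite L \<and> finite R \<and> E \<subseteq> L \<times> R"

definition left_degree_le :: "nat set \<Rightarrow> (nat \<times> nat) set \<Rightarrow> real \<Rightarrow> bool" where
  "left_degree_le L E D \<longleftrightarrow> (\<forall>x\<in>L. real (card {y. (x, y) \<in> E}) \<le> D)"

text \<open>One round of the matching game: from position M, Requester keeps M' \<subseteq> M with
  #M' \<le> K-1 and selects a left node x; Matcher adds an edge e, and afterwards x must be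
  covered and each right node must be incident to at most one edge.\<close>

definition matcher_ok :: "nat set \<Rightarrow> (nat \<times> nat) set \<Rightarrow> nat \<Rightarrow> (nat \<times> nat) set \<Rightarrow> nat
    \<Rightarrow> (nat \<times> nat) set \<Rightarrow> bool" where
  "matcher_ok L E K M' x M'' \<longleftrightarrow>
     (\<exists>e\<in>E. M'' = insert e M') \<and> x \<in> fst ` M'' \<and> inj_on snd M''"

text \<open>Matcher has a strategy with which she never loses: there is a set of positions
  (a safe region) containing the initial empty position, from which Matcher can answer
  every legal Requester move by a legal move landing again in the safe region.\<close>

definition dynamic_matching :: "nat set \<Rightarrow> nat set \<Rightarrow> (nat \<times> nat) set \<Rightarrow> nat \<Rightarrow> bool" where
  "dynamic_matching L R E K \<longleftrightarrow>
     (\<exists>S. {} \<in> S \<and>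
        (\<forall>M\<in>S. \<forall>M' x. M' \<subseteq> M \<and> card M' \<le> K - 1 \<and> x \<in> L \<longrightarrow>
            (\<exists>M''\<in>S. matcher_ok L E K M' x M'')))"

definition network :: "nat \<Rightarrow> nat set \<Rightarrow> (nat \<times> nat) set \<Rightarrow> nat set \<Rightarrow> nat set \<Rightarrow> bool" where
  "network N V A In Out \<longleftrightarrow> finite V \<and> A \<subseteq> V \<times> V \<and> acyclic A \<and>
     In \<subseteq> V \<and> Out \<subseteq> V \<and> card In = N \<and> card Out = N"

definition depth :: "(nat \<times> nat) set \<Rightarrow> nat set \<Rightarrow> nat set \<Rightarrow> nat" where
  "depth A In Out = Max {k. \<exists>x\<in>In. \<exists>y\<in>Out. (x, y) \<in> A ^^ k}"

text \<open>A tree is a pair (r, T) of a root and a finite set of edges of the network.\<close>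

definition tree_nodes :: "nat \<times> (nat \<times> nat) set \<Rightarrow> nat set" where
  "tree_nodes \<tau> = insert (fst \<tau>) (fst ` snd \<tau> \<union> snd ` snd \<tau>)"

definition tree_leaves :: "nat \<times> (nat \<times> nat) set \<Rightarrow> nat set" where
  "tree_leaves \<tau> = {v \<in> tree_nodes \<tau>. \<not> (\<exists>w. (v, w) \<in> snd \<tau>)}"

definition is_tree :: "(nat \<times> nat) set \<Rightarrow> nat set \<Rightarrow> nat set \<Rightarrow> nat \<times> (nat \<times> nat) set \<Rightarrow> bool" where
  "is_tree A In Out \<tau> \<longleftrightarrow> (let r = fst \<tau>; T = snd \<tau> in
     finite T \<and> T \<subseteq> A \<and> r \<in> In \<and>
     (\<forall>u. (u, r) \<notin> T) \<and>
     (\<forall>v\<in>tree_nodes \<tau> - {r}. \<exists>!u. (u, v) \<in> T) \<and>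
     (\<forall>v\<in>tree_nodes \<tau>. (r, v) \<in> T\<^sup>*) \<and>
     tree_leaves \<tau> \<subseteq> Out)"

definition valid_forest :: "(nat \<times> nat) set \<Rightarrow> nat set \<Rightarrow> nat set
    \<Rightarrow> (nat \<times> (nat \<times> nat) set) set \<Rightarrow> bool" where
  "valid_forest A In Out F \<longleftrightarrow> finite F \<and> (\<forall>\<tau>\<in>F. is_tree A In Out \<tau>) \<and>
     (\<forall>\<tau>\<in>F. \<forall>\<sigma>\<in>F. \<tau> \<noteq> \<sigma> \<longrightarrow> tree_nodes \<tau> \<inter> tree_nodes \<sigma> = {})"

definition connector_ok :: "(nat \<times> nat) set \<Rightarrow> nat set \<Rightarrow> nat set
    \<Rightarrow> (nat \<times> (nat \<times> nat) set) set \<Rightarrow> (nat \<times> nat) option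
    \<Rightarrow> (nat \<times> (nat \<times> nat) set) set \<Rightarrow> bool" where
  "connector_ok A In Out F' req F'' \<longleftrightarrow>
     (F'' = F' \<or> (\<exists>\<tau>. F'' = insert \<tau> F') \<or>
      (\<exists>\<sigma>\<in>F'. \<exists>\<tau>. fst \<tau> = fst \<sigma> \<and> snd \<sigma> \<subseteq> snd \<tau> \<and> F'' = insert \<tau> (F' - {\<sigma>}))) \<and>
     valid_forest A In Out F'' \<and>
     (\<forall>x y. req = Some (x, y) \<longrightarrow> (\<exists>\<tau>\<in>F''. fst \<tau> = x \<and> y \<in> tree_leaves \<tau>))"

definition requester_ok :: "nat set \<Rightarrow> nat set
    \<Rightarrow> (nat \<times> (nat \<times> nat) set) set \<Rightarrow> (nat \<times> (nat \<times> nat) set) set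
    \<Rightarrow> (nat \<times> nat) option \<Rightarrow> bool" where
  "requester_ok In Out F F' req \<longleftrightarrow> F' \<subseteq> F \<and>
     (\<forall>x y. req = Some (x, y) \<longrightarrow> x \<in> In \<and> y \<in> Out \<and> (\<forall>\<tau>\<in>F'. y \<notin> tree_nodes \<tau>))"

definition connector_wins :: "(nat \<times> nat) set \<Rightarrow> nat set \<Rightarrow> nat set \<Rightarrow> bool" where
  "connector_wins A In Out \<longleftrightarrow>
     (\<exists>S. {} \<in> S \<and>
        (\<forall>F\<in>S. \<forall>F' req. requester_ok In Out F F' req \<longrightarrow>
            (\<exists>F''\<in>S. connector_ok A In Out F' req F'')))"

definition connector :: "nat \<Rightarrow> nat set \<Rightarrow> (nat \<times> nat) set \<Rightarrow> nat set \<Rightarrow> nat set \<Rightarrow> bool" where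
  "connector N V A In Out \<longleftrightarrow> network N V A In Out \<and> connector_wins A In Out"

end

theory Submission
  imports Defs "HOL-Library.Nat_Bijection"
begin

definition nd :: "nat \<Rightarrow> nat \<Rightarrow> nat \<Rightarrow> nat" where
  "nd k g i = prod_encode (k, prod_encode (g, i))"
definition lev :: "nat \<Rightarrow> nat" where "lev v = fst (prod_decode v)"
definition grp :: "nat \<Rightarrow> nat" where "grp v = fst (prod_decode (snd (prod_decode v)))"

lemma lev_nd[simp]: "lev (nd k g i) = k" by (simp add: lev_def nd_def)
lemma grp_nd[simp]: "grp (nd k g i) = g" by (simp add: grp_def nd_def)
lemma nd_eq[simp]: "nd k g i = nd k' g' i' \<longleftrightarrow> k = k' \<and> g = g' \<and> i = i'"
  by (auto simp: nd_def dest!: inj_onD[OF inj_prod_encode, simplified])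

lemma relpow_subset: "(T::('a\<times>'a) set) \<subseteq> A \<Longrightarrow> T ^^ m \<subseteq> A ^^ m"
proof (induction m)
  case (Suc m) show ?case
  proof clarify
    fix a b assume "(a, b) \<in> T ^^ Suc m"
    then obtain z where "(a, z) \<in> T ^^ m" "(z, b) \<in> T" by (rule relpow_Suc_E)
    with Suc show "(a, b) \<in> A ^^ Suc m" by (blast intro: relpow_Suc_I)
  qed
qed (clarify, erule relpow_0_E, simp add: relpow_0_I)

lemma card_UN_bound:
  assumes "finite I" "\<And>i. i \<in> I \<Longrightarrow> real (card (A i)) \<le> K"
  shows "real (card (\<Union>i\<in>I. A i)) \<le> real (card I) * K"
proof -
  have "real (card (\<Union>i\<in>I. A i)) \<le> real (\<Sum>i\<in>I. card (A i))"
    using card_UN_le[OF assms(1), of A] by linarith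
  also have "\<dots> = (\<Sum>i\<in>I. real (card (A i)))" by simp
  also have "\<dots> \<le> real (card I) * K" using sum_bounded_above[of I "\<lambda>i. real (card (A i))" K] assms(2) by simp
  finally show ?thesis .
qed

locale conn =
  fixes n t :: nat and C D :: real and L R :: "nat \<Rightarrow> nat set"
    and E :: "nat \<Rightarrow> (nat \<times> nat) set"
    and S :: "nat \<Rightarrow> (nat \<times> nat) set set" and \<phi> :: "nat \<Rightarrow> nat \<Rightarrow> nat"
  assumes n_pos: "n > 0" and t_pos: "t > 0" and C1: "C \<ge> 1" and D1: "D \<ge> 1"
    and finL: "\<And>k. 0 < k \<Longrightarrow> k < t \<Longrightarrow> finite (L k)"
    and finR: "\<And>k. 0 < k \<Longrightarrow> k < t \<Longrightarrow> finite (R k)"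
    and ELR: "\<And>k. 0 < k \<Longrightarrow> k < t \<Longrightarrow> E k \<subseteq> L k \<times> R k"
    and deg: "\<And>k a. 0 < k \<Longrightarrow> k < t \<Longrightarrow> a \<in> L k \<Longrightarrow> real (card {r. (a, r) \<in> E k}) \<le> D"
    and cardIdx: "\<And>k. 0 < k \<Longrightarrow> k \<le> t \<Longrightarrow>
        real (card (if k = t then {..<n^t} else R k)) \<le> C * real n ^ k"
    and phi: "\<And>k. 0 < k \<Longrightarrow> k < t \<Longrightarrow>
        inj_on (\<phi> k) (if Suc k = t then {..<n^t} else R (Suc k)) \<and>
        \<phi> k ` (if Suc k = t then {..<n^t} else R (Suc k)) \<subseteq> L k"
    and Sgame: "\<And>k. 0 < k \<Longrightarrow> k < t \<Longrightarrow> {} \<in> S k \<and>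
        (\<forall>M\<in>S k. \<forall>M' x. M' \<subseteq> M \<and> card M' \<le> n^k - 1 \<and> x \<in> L k \<longrightarrow>
            (\<exists>M''\<in>S k. matcher_ok (L k) (E k) (n^k) M' x M''))"
begin

definition Idx :: "nat \<Rightarrow> nat set" where
  "Idx k = (if k = t then {..<n^t} else R k)"

lemma phi': "0 < k \<Longrightarrow> k < t \<Longrightarrow> inj_on (\<phi> k) (Idx (Suc k)) \<and> \<phi> k ` Idx (Suc k) \<subseteq> L k"
  using phi[of k] by (simp add: Idx_def)

definition A1 :: "(nat \<times> nat) set" where
  "A1 = {(nd (Suc k) (g div n) i, nd k g r) | k g i r. 0 < k \<and> k < t \<and> g < n^(t-k) \<and>
          i \<in> Idx (Suc k) \<and> (\<phi> k i, r) \<in> E k}"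
definition A0 :: "(nat \<times> nat) set" where
  "A0 = {(nd 1 (g div n) i, nd 0 g 0) | g i. g < n^t \<and> i \<in> Idx 1}"
definition AA :: "(nat \<times> nat) set" where "AA = A1 \<union> A0"
definition In :: "nat set" where "In = (\<lambda>i. nd t 0 i) ` {..<n^t}"
definition Out :: "nat set" where "Out = (\<lambda>g. nd 0 g 0) ` {..<n^t}"

lemma AA_E:
  assumes "(a, b) \<in> AA"
  shows "lev a = Suc (lev b) \<and> grp b div n = grp a \<and> lev b < t"
  using assms t_pos by (auto simp: AA_def A1_def A0_def)

lemma AA_edge:
  assumes "(nd (Suc k) g' i, nd k g r) \<in> AA" "0 < k"
  shows "k < t \<and> g < n^(t-k) \<and> g' = g div n \<and> i \<in> Idx (Suc k) \<and> (\<phi> k i, r) \<in> E k"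
  using assms by (auto simp: AA_def A1_def A0_def)

lemma AA_into: "(a, b) \<in> AA \<Longrightarrow> lev b = 0 \<Longrightarrow> b \<in> Out"
  by (auto simp: AA_def A1_def A0_def Out_def)

lemma lev_In: "x \<in> In \<Longrightarrow> lev x = t" by (auto simp: In_def)
lemma lev_Out: "x \<in> Out \<Longrightarrow> lev x = 0" by (auto simp: Out_def)

lemma AA_pow:
  "(a, b) \<in> AA ^^ m \<Longrightarrow> lev a = lev b + m \<and> grp b div n ^ m = grp a"
proof (induction m arbitrary: b)
  case 0 then show ?case by simp
next
  case (Suc m)
  from Suc.prems obtain z where z: "(a, z) \<in> AA ^^ m" "(z, b) \<in> AA" by (rule relpow_Suc_E)
  from Suc.IH[OF z(1)] AA_E[OF z(2)] show ?case
    by (simp add: div_mult2_eq mult.commute)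
qed

lemma AA_rtr: "(a, b) \<in> AA\<^sup>* \<Longrightarrow> lev b \<le> lev a \<and> grp b div n ^ (lev a - lev b) = grp a"
  using AA_pow by (auto simp: rtrancl_power)

lemma acyc: "acyclic AA"
  unfolding acyclic_def
proof
  fix x show "(x, x) \<notin> AA\<^sup>+"
  proof
    assume "(x, x) \<in> AA\<^sup>+"
    then obtain m where "m > 0" "(x, x) \<in> AA ^^ m" by (auto simp: trancl_power)
    with AA_pow[of x x m] show False by simp
  qed
qed

definition ptree :: "nat set \<Rightarrow> nat \<times> (nat \<times> nat) set \<Rightarrow> bool" where
  "ptree W \<tau> \<longleftrightarrow> finite (snd \<tau>) \<and> snd \<tau> \<subseteq> AA \<and> fst \<tau> \<in> In \<and>
     (\<forall>u. (u, fst \<tau>) \<notin> snd \<tau>) \<and>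
     (\<forall>v\<in>tree_nodes \<tau> - {fst \<tau>}. \<exists>!u. (u, v) \<in> snd \<tau>) \<and>
     (\<forall>v\<in>tree_nodes \<tau>. (fst \<tau>, v) \<in> (snd \<tau>)\<^sup>*) \<and>
     tree_leaves \<tau> \<subseteq> Out \<union> W"

lemma is_tree_ptree: "is_tree AA In Out \<tau> \<longleftrightarrow> ptree {} \<tau>"
  by (simp add: is_tree_def ptree_def Let_def)

lemma ptree_mono: "ptree W \<tau> \<Longrightarrow> W \<subseteq> W' \<Longrightarrow> ptree W' \<tau>"
  by (auto simp: ptree_def)

lemma edge_nodes: "(a, b) \<in> snd \<tau> \<Longrightarrow> a \<in> tree_nodes \<tau> \<and> b \<in> tree_nodes \<tau>"
  by (force simp: tree_nodes_def)

lemma root_node: "fst \<tau> \<in> tree_nodes \<tau>"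
  by (simp add: tree_nodes_def)

lemma nodes_closed: "(a, b) \<in> (snd \<tau>)\<^sup>* \<Longrightarrow> a \<in> tree_nodes \<tau> \<Longrightarrow> b \<in> tree_nodes \<tau>"
  by (induction rule: rtrancl_induct) (auto dest: edge_nodes)

lemma nonroot_parent:
  assumes "ptree W \<tau>" "v \<in> tree_nodes \<tau>" "lev v < t"
  shows "\<exists>p. (p, v) \<in> snd \<tau>"
proof -
  have "v \<noteq> fst \<tau>" using assms lev_In by (auto simp: ptree_def)
  with assms show ?thesis unfolding ptree_def by blast
qed

lemma tree_edge_AA: "ptree W \<tau> \<Longrightarrow> (a, b) \<in> snd \<tau> \<Longrightarrow> (a, b) \<in> AA"
  by (auto simp: ptree_def)

lemma leaf_exists:
  assumes "ptree W \<tau>" "a \<in> tree_nodes \<tau>"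
  shows "\<exists>oo\<in>tree_leaves \<tau>. (a, oo) \<in> (snd \<tau>)\<^sup>*"
proof -
  have "\<forall>a. lev a = m \<longrightarrow> a \<in> tree_nodes \<tau> \<longrightarrow> (\<exists>oo\<in>tree_leaves \<tau>. (a, oo) \<in> (snd \<tau>)\<^sup>*)" for m
  proof (induction m)
    case 0
    show ?case
    proof clarify
      fix a assume a: "lev a = 0" "a \<in> tree_nodes \<tau>"
      have "\<not> (\<exists>w. (a, w) \<in> snd \<tau>)"
        using a(1) tree_edge_AA[OF assms(1)] AA_E by fastforce
      with a show "\<exists>oo\<in>tree_leaves \<tau>. (a, oo) \<in> (snd \<tau>)\<^sup>*"
        by (auto simp: tree_leaves_def)
    qed
  next
    case (Suc m)
    show ?case
    proof clarify
      fix a assume a: "lev a = Suc m" "a \<in> tree_nodes \<tau>"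
      show "\<exists>oo\<in>tree_leaves \<tau>. (a, oo) \<in> (snd \<tau>)\<^sup>*"
      proof (cases "\<exists>w. (a, w) \<in> snd \<tau>")
        case True
        then obtain w where w: "(a, w) \<in> snd \<tau>" by blast
        then have "lev w = m" using a(1) tree_edge_AA[OF assms(1) w] AA_E by fastforce
        with Suc.IH edge_nodes[OF w] obtain oo where "oo \<in> tree_leaves \<tau>" "(w, oo) \<in> (snd \<tau>)\<^sup>*"
          by blast
        with w show ?thesis by (meson converse_rtrancl_into_rtrancl)
      next
        case False
        with a show ?thesis by (auto simp: tree_leaves_def)
      qed
    qed
  qed
  with assms show ?thesis by blast
qed

lemma uniq_anc:
  assumes "ptree W \<tau>" "(a, oo) \<in> (snd \<tau>)\<^sup>*" "(b, oo) \<in> (snd \<tau>)\<^sup>*" "lev a = lev b"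
  shows "a = b"
proof -
  have sub: "snd \<tau> \<subseteq> AA" using assms(1) by (simp add: ptree_def)
  obtain m1 where m1: "(a, oo) \<in> snd \<tau> ^^ m1" using assms(2) by (auto simp: rtrancl_power)
  obtain m2 where m2: "(b, oo) \<in> snd \<tau> ^^ m2" using assms(3) by (auto simp: rtrancl_power)
  have "(a, oo) \<in> AA ^^ m1" "(b, oo) \<in> AA ^^ m2" using relpow_subset[OF sub] m1 m2 by auto
  then have "m1 = m2" using AA_pow[of a oo m1] AA_pow[of b oo m2] assms(4) by simp
  have "\<forall>a b oo. (a, oo) \<in> snd \<tau> ^^ m \<longrightarrow> (b, oo) \<in> snd \<tau> ^^ m \<longrightarrow> a = b" for m
  proof (induction m)
    case 0 then show ?case by (auto elim: relpow_0_E)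
  next
    case (Suc m)
    show ?case
    proof clarify
      fix a b oo assume "(a, oo) \<in> snd \<tau> ^^ Suc m" "(b, oo) \<in> snd \<tau> ^^ Suc m"
      then obtain z1 z2 where z: "(a, z1) \<in> snd \<tau> ^^ m" "(z1, oo) \<in> snd \<tau>"
        "(b, z2) \<in> snd \<tau> ^^ m" "(z2, oo) \<in> snd \<tau>" by (meson relpow_Suc_E)
      have "oo \<in> tree_nodes \<tau> - {fst \<tau>}" using z(2) assms(1) edge_nodes[OF z(2)]
        by (auto simp: ptree_def)
      then have "\<exists>!u. (u, oo) \<in> snd \<tau>" using assms(1) by (auto simp: ptree_def)
      then have "z1 = z2" using z by blast
      with Suc.IH z show "a = b" by blast
    qed
  qed
  with m1 m2 \<open>m1 = m2\<close> show ?thesis by blast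
qed

lemma extend:
  assumes "ptree {u} \<tau>" "u \<in> tree_nodes \<tau>" "(u, v) \<in> AA" "v \<notin> tree_nodes \<tau>"
  shows "ptree {v} (fst \<tau>, insert (u, v) (snd \<tau>)) \<and>
         tree_nodes (fst \<tau>, insert (u, v) (snd \<tau>)) = insert v (tree_nodes \<tau>)"
proof -
  obtain x T where xT: "\<tau> = (x, T)" by (cases \<tau>)
  have nodes: "tree_nodes (x, insert (u, v) T) = insert v (tree_nodes (x, T))"
    using assms(2) by (auto simp: tree_nodes_def xT)
  have pt: "finite T" "T \<subseteq> AA" "x \<in> In" "\<forall>w. (w, x) \<notin> T"
    "\<forall>w\<in>tree_nodes (x, T) - {x}. \<exists>!p. (p, w) \<in> T"
    "\<forall>w\<in>tree_nodes (x, T). (x, w) \<in> T\<^sup>*" "tree_leaves (x, T) \<subseteq> Out \<union> {u}"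
    using assms(1) by (auto simp: ptree_def xT)
  have vx: "v \<noteq> x" using assms(2,4) by (auto simp: xT tree_nodes_def)
  have vT: "(p, v) \<notin> T" for p using assms(4) edge_nodes[of p v \<tau>] xT by auto
  have "ptree {v} (x, insert (u, v) T)"
    unfolding ptree_def fst_conv snd_conv
  proof (intro conjI)
    show "finite (insert (u, v) T)" using pt by simp
    show "insert (u, v) T \<subseteq> AA" using pt assms(3) by simp
    show "x \<in> In" by fact
    show "\<forall>w. (w, x) \<notin> insert (u, v) T" using pt vx by auto
    show "\<forall>w\<in>tree_nodes (x, insert (u, v) T) - {x}. \<exists>!p. (p, w) \<in> insert (u, v) T"
    proof
      fix w assume w: "w \<in> tree_nodes (x, insert (u, v) T) - {x}"
      show "\<exists>!p. (p, w) \<in> insert (u, v) T"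
      proof (cases "w = v")
        case True then show ?thesis using vT by auto
      next
        case False
        then have "w \<in> tree_nodes (x, T) - {x}" using w nodes by auto
        with pt(5) False show ?thesis by auto
      qed
    qed
    show "\<forall>w\<in>tree_nodes (x, insert (u, v) T). (x, w) \<in> (insert (u, v) T)\<^sup>*"
    proof
      fix w assume w: "w \<in> tree_nodes (x, insert (u, v) T)"
      have mono: "T\<^sup>* \<subseteq> (insert (u, v) T)\<^sup>*" by (rule rtrancl_mono) auto
      show "(x, w) \<in> (insert (u, v) T)\<^sup>*"
      proof (cases "w = v")
        case True
        have "(x, u) \<in> (insert (u, v) T)\<^sup>*" using pt(6) assms(2) xT mono by auto
        then show ?thesis using True by (meson insertI1 rtrancl.rtrancl_into_rtrancl)
      next
        case False
        then show ?thesis using w nodes pt(6) mono by auto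
      qed
    qed
    show "tree_leaves (x, insert (u, v) T) \<subseteq> Out \<union> {v}"
    proof
      fix w assume w: "w \<in> tree_leaves (x, insert (u, v) T)"
      show "w \<in> Out \<union> {v}"
      proof (cases "w = v")
        case False
        with w nodes have "w \<in> tree_leaves (x, T)" "w \<noteq> u"
          by (auto simp: tree_leaves_def)
        with pt(7) show ?thesis by auto
      qed simp
    qed
  qed
  with nodes xT show ?thesis by simp
qed

definition Mset :: "(nat \<times> (nat \<times> nat) set) set \<Rightarrow> nat \<Rightarrow> nat \<Rightarrow> (nat \<times> nat) set" where
  "Mset Q k g = {(\<phi> k i, r) | i r. \<exists>\<rho>\<in>Q. (nd (Suc k) (g div n) i, nd k g r) \<in> snd \<rho>}"

definition disj :: "(nat \<times> (nat \<times> nat) set) set \<Rightarrow> bool" where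
  "disj Q \<longleftrightarrow> (\<forall>\<rho>\<in>Q. \<forall>\<rho>'\<in>Q. \<rho> \<noteq> \<rho>' \<longrightarrow> tree_nodes \<rho> \<inter> tree_nodes \<rho>' = {})"

lemma count:
  assumes Q: "\<forall>\<rho>\<in>Q. ptree W \<rho>" "disj Q" "\<forall>w\<in>W. lev w > k"
    "\<forall>\<rho>\<in>Q. y \<notin> tree_nodes \<rho>" "y = nd 0 g0 0" "g0 < n^t" "0 < k" "k < t"
  shows "card (Mset Q k (g0 div n^k)) \<le> n^k - 1"
proof -
  define g where "g = g0 div n^k"
  define Outg where "Outg = (\<lambda>g'. nd 0 g' 0) ` {g * n^k ..< g * n^k + n^k}"
  have cOutg: "card Outg = n^k" unfolding Outg_def
    by (subst card_image) (auto simp: inj_on_def)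
  have yO: "y \<in> Outg" unfolding Outg_def Q(5) g_def
  proof (rule imageI)
    have "g0 = g0 div n^k * n^k + g0 mod n^k" by (rule div_mult_mod_eq[symmetric])
    moreover have "g0 mod n^k < n^k" using n_pos by simp
    ultimately show "g0 \<in> {g0 div n ^ k * n ^ k..<g0 div n ^ k * n ^ k + n ^ k}"
      by (metis add_less_cancel_left atLeastLessThan_iff le_add1)
  qed
  define B where "B = Outg - {y}"
  have cB: "card B = n^k - 1" using cOutg yO by (simp add: B_def Outg_def)
  define Pz where "Pz p z \<longleftrightarrow> (\<exists>\<rho>\<in>Q. \<exists>i r. p = (\<phi> k i, r) \<and>
      (nd (Suc k) (g div n) i, nd k g r) \<in> snd \<rho> \<and> z \<in> tree_leaves \<rho> \<and>
      (nd k g r, z) \<in> (snd \<rho>)\<^sup>*)" for p z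
  define f where "f p = (SOME z. Pz p z)" for p
  have fP: "Pz p (f p)" if p: "p \<in> Mset Q k g" for p
  proof -
    from p obtain i r \<rho> where ir: "p = (\<phi> k i, r)" "\<rho> \<in> Q"
      "(nd (Suc k) (g div n) i, nd k g r) \<in> snd \<rho>" by (auto simp: Mset_def)
    obtain z where "z \<in> tree_leaves \<rho>" "(nd k g r, z) \<in> (snd \<rho>)\<^sup>*"
      using leaf_exists[of W \<rho> "nd k g r"] Q(1) ir edge_nodes by blast
    then have "\<exists>z. Pz p z" unfolding Pz_def using ir by blast
    then show ?thesis unfolding f_def by (rule someI_ex)
  qed
  have "card (Mset Q k g) \<le> card B"
  proof (rule card_inj_on_le)
    show "finite B" by (simp add: B_def Outg_def)
    show "f ` Mset Q k g \<subseteq> B"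
    proof clarify
      fix p assume p: "p \<in> Mset Q k g"
      from fP[OF p] obtain \<rho> i r where ir: "\<rho> \<in> Q" "p = (\<phi> k i, r)"
        "(nd (Suc k) (g div n) i, nd k g r) \<in> snd \<rho>" "f p \<in> tree_leaves \<rho>"
        "(nd k g r, f p) \<in> (snd \<rho>)\<^sup>*" unfolding Pz_def by blast
      have sub: "snd \<rho> \<subseteq> AA" using Q(1) ir(1) by (simp add: ptree_def)
      have "(nd k g r, f p) \<in> AA\<^sup>*" using ir(5) rtrancl_mono[OF sub] by blast
      from AA_rtr[OF this] have lv: "lev (f p) \<le> k" "grp (f p) div n ^ (k - lev (f p)) = g" by auto
      have "f p \<in> Out \<union> W" using Q(1) ir(1,4) by (auto simp: ptree_def)
      then have "f p \<in> Out" using Q(3) lv(1) by force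
      then obtain g' where g': "f p = nd 0 g' 0" "g' < n^t" by (auto simp: Out_def)
      have "g' div n^k = g" using lv g' by simp
      then have "g' \<in> {g * n^k ..< g * n^k + n^k}"
        by (metis add.commute atLeastLessThan_iff div_mult_mod_eq le_add1 mod_less_divisor
              mult.commute n_pos nat_add_left_cancel_less zero_less_power)
      moreover have "f p \<noteq> y" using ir(1,4) Q(4) by (auto simp: tree_leaves_def)
      ultimately show "f p \<in> B" using g' by (auto simp: B_def Outg_def)
    qed
    show "inj_on f (Mset Q k g)"
    proof (rule inj_onI)
      fix p1 p2 assume p: "p1 \<in> Mset Q k g" "p2 \<in> Mset Q k g" "f p1 = f p2"
      from fP[OF p(1)] obtain \<rho>1 i1 r1 where 1: "\<rho>1 \<in> Q" "p1 = (\<phi> k i1, r1)"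
        "(nd (Suc k) (g div n) i1, nd k g r1) \<in> snd \<rho>1" "f p1 \<in> tree_leaves \<rho>1"
        "(nd k g r1, f p1) \<in> (snd \<rho>1)\<^sup>*" unfolding Pz_def by blast
      from fP[OF p(2)] obtain \<rho>2 i2 r2 where 2: "\<rho>2 \<in> Q" "p2 = (\<phi> k i2, r2)"
        "(nd (Suc k) (g div n) i2, nd k g r2) \<in> snd \<rho>2" "f p2 \<in> tree_leaves \<rho>2"
        "(nd k g r2, f p2) \<in> (snd \<rho>2)\<^sup>*" unfolding Pz_def by blast
      have "\<rho>1 = \<rho>2"
      proof (rule ccontr)
        assume "\<rho>1 \<noteq> \<rho>2"
        then have "tree_nodes \<rho>1 \<inter> tree_nodes \<rho>2 = {}" using Q(2) 1(1) 2(1) by (auto simp: disj_def)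
        moreover have "f p1 \<in> tree_nodes \<rho>1" "f p2 \<in> tree_nodes \<rho>2" using 1(4) 2(4)
          by (auto simp: tree_leaves_def)
        ultimately show False using p(3) by auto
      qed
      then have "nd k g r1 = nd k g r2"
        using uniq_anc[of W \<rho>1 "nd k g r1" "f p1" "nd k g r2"] Q(1) 1 2 p(3) by auto
      then have r: "r1 = r2" by simp
      have "fst \<rho>1 \<in> In" using Q(1) 1(1) by (simp add: ptree_def)
      then have "lev (fst \<rho>1) = t" by (rule lev_In)
      then have "nd k g r1 \<noteq> fst \<rho>1" using Q(8) by (metis lev_nd less_irrefl)
      then have "nd k g r1 \<in> tree_nodes \<rho>1 - {fst \<rho>1}"
        using edge_nodes[OF 1(3)] by blast
      then have "\<exists>!u. (u, nd k g r1) \<in> snd \<rho>1" using Q(1) 1(1) by (auto simp: ptree_def)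
      then have "nd (Suc k) (g div n) i1 = nd (Suc k) (g div n) i2"
        using 1(3) 2(3) \<open>\<rho>1 = \<rho>2\<close> r by blast
      then have "i1 = i2" by simp
      with 1(2) 2(2) r show "p1 = p2" by simp
    qed
  qed
  with cB show ?thesis by (simp add: g_def)
qed

lemma nd_surj: "\<exists>k g i. p = nd k g i"
proof -
  obtain k q where kq: "prod_decode p = (k, q)" by (cases "prod_decode p")
  obtain g i where gi: "prod_decode q = (g, i)" by (cases "prod_decode q")
  have "p = prod_encode (k, q)" using kq by (metis prod_decode_inverse)
  moreover have "q = prod_encode (g, i)" using gi by (metis prod_decode_inverse)
  ultimately show ?thesis by (auto simp: nd_def)
qed

lemma div_bound: assumes "g0 < n^t" "k \<le> t" shows "g0 div n^k < n^(t-k)"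
proof -
  have "n^t = n^(t-k) * n^k" using assms(2) by (simp add: power_add[symmetric])
  then show ?thesis using assms(1) by (simp add: less_mult_imp_div_less)
qed

lemma div_Suc: "g0 div n^k div n = g0 div n^(Suc k)"
  by (simp only: power_Suc2 div_mult2_eq)

lemma A1I: "0 < k \<Longrightarrow> k < t \<Longrightarrow> g < n^(t-k) \<Longrightarrow> i \<in> Idx (Suc k) \<Longrightarrow> (\<phi> k i, r) \<in> E k
   \<Longrightarrow> (nd (Suc k) (g div n) i, nd k g r) \<in> AA"
  unfolding AA_def A1_def
  apply (rule UnI1)
  apply (simp only: mem_Collect_eq)
  apply (rule exI[of _ k], rule exI[of _ g], rule exI[of _ i], rule exI[of _ r])
  by simp

lemma A0I: "g < n^t \<Longrightarrow> i \<in> Idx 1 \<Longrightarrow> (nd 1 (g div n) i, nd 0 g 0) \<in> AA"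
  unfolding AA_def A0_def
  apply (rule UnI2)
  apply (simp only: mem_Collect_eq)
  apply (rule exI[of _ g], rule exI[of _ i])
  by simp

lemma ptree_next: "ptree {u} \<tau> \<Longrightarrow> (u, w) \<in> snd \<tau> \<Longrightarrow> ptree {w} \<tau>"
  by (auto simp: ptree_def tree_leaves_def)

lemma ptree_Out: "ptree W \<tau> \<Longrightarrow> W \<subseteq> Out \<Longrightarrow> ptree {} \<tau>"
  by (auto simp: ptree_def)

definition SI where
  "SI y g0 k P \<tau> u \<longleftrightarrow> finite P \<and> (\<forall>\<rho>\<in>P. ptree {} \<rho>) \<and> disj (insert \<tau> P) \<and> \<tau> \<notin> P \<and>
     ptree {u} \<tau> \<and> (\<forall>k' g. 0 < k' \<and> k' < t \<longrightarrow> (\<exists>M\<in>S k'. Mset (insert \<tau> P) k' g \<subseteq> M)) \<and>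
     (\<forall>\<rho>\<in>insert \<tau> P. y \<notin> tree_nodes \<rho>) \<and> u \<in> tree_nodes \<tau> \<and>
     (\<exists>i\<in>Idx k. u = nd k (g0 div n^k) i) \<and> y = nd 0 g0 0 \<and> g0 < n^t"

lemma disj_extend:
  assumes "disj (insert \<tau> P)" "\<tau> \<notin> P" "fst \<tau>' = fst \<tau>"
    "tree_nodes \<tau>' = insert v (tree_nodes \<tau>)" "\<forall>\<rho>\<in>P. v \<notin> tree_nodes \<rho>"
  shows "disj (insert \<tau>' P) \<and> \<tau>' \<notin> P"
proof -
  have n: "\<forall>\<rho>\<in>P. tree_nodes \<tau> \<inter> tree_nodes \<rho> = {}" using assms(1,2) by (auto simp: disj_def)
  have "\<tau>' \<notin> P"
  proof
    assume "\<tau>' \<in> P"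
    then have "tree_nodes \<tau> \<inter> tree_nodes \<tau>' = {}" using n by blast
    moreover have "fst \<tau> \<in> tree_nodes \<tau>" "fst \<tau> \<in> tree_nodes \<tau>'"
      using assms(3) root_node[of \<tau>] root_node[of \<tau>'] by auto
    ultimately show False by blast
  qed
  moreover have "disj (insert \<tau>' P)"
    unfolding disj_def
  proof (intro ballI impI)
    fix \<rho>1 \<rho>2 assume r: "\<rho>1 \<in> insert \<tau>' P" "\<rho>2 \<in> insert \<tau>' P" "\<rho>1 \<noteq> \<rho>2"
    have dP: "\<forall>a\<in>P. \<forall>b\<in>P. a \<noteq> b \<longrightarrow> tree_nodes a \<inter> tree_nodes b = {}"
      using assms(1) by (simp add: disj_def)
    have nt: "\<forall>\<rho>\<in>P. tree_nodes \<tau>' \<inter> tree_nodes \<rho> = {}" using n assms(4,5) by auto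
    show "tree_nodes \<rho>1 \<inter> tree_nodes \<rho>2 = {}"
    proof (cases "\<rho>1 = \<tau>'")
      case True
      then have "\<rho>2 \<in> P" using r by auto
      then show ?thesis using nt True by blast
    next
      case False
      then have "\<rho>1 \<in> P" using r by auto
      show ?thesis
      proof (cases "\<rho>2 = \<tau>'")
        case True
        then show ?thesis using nt \<open>\<rho>1 \<in> P\<close> by blast
      next
        case False
        then show ?thesis using dP r(2,3) \<open>\<rho>1 \<in> P\<close> by blast
      qed
    qed
  qed
  ultimately show ?thesis by blast
qed

lemma step:
  assumes si: "SI y g0 (Suc k) P \<tau> u" and k: "0 < k" "k < t"
  shows "\<exists>\<tau>' u'. SI y g0 k P \<tau>' u' \<and> fst \<tau>' = fst \<tau> \<and> snd \<tau> \<subseteq> snd \<tau>'"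
proof -
  define g where "g = g0 div n^k"
  have "\<exists>i\<in>Idx (Suc k). u = nd (Suc k) (g0 div n^(Suc k)) i" using si by (simp add: SI_def)
  then obtain i where i: "i \<in> Idx (Suc k)" "u = nd (Suc k) (g div n) i"
    unfolding g_def div_Suc by blast
  have si': "finite P" "\<forall>\<rho>\<in>P. ptree {} \<rho>" "disj (insert \<tau> P)" "\<tau> \<notin> P"
     "ptree {u} \<tau>" "\<forall>k' g. 0 < k' \<and> k' < t \<longrightarrow> (\<exists>M\<in>S k'. Mset (insert \<tau> P) k' g \<subseteq> M)"
     "\<forall>\<rho>\<in>insert \<tau> P. y \<notin> tree_nodes \<rho>" "u \<in> tree_nodes \<tau>" "y = nd 0 g0 0" "g0 < n^t"
    using si by (auto simp: SI_def)
  have IdxR: "Idx k = R k" using k by (simp add: Idx_def)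
  show ?thesis
  proof (cases "\<exists>r. (u, nd k g r) \<in> snd \<tau>")
    case True
    then obtain r where r: "(u, nd k g r) \<in> snd \<tau>" by blast
    have "(u, nd k g r) \<in> AA" using tree_edge_AA[OF si'(5) r] .
    then have "(\<phi> k i, r) \<in> E k" using AA_edge[of k "g div n" i g r] i k by simp
    then have "r \<in> Idx k" using ELR[OF k] IdxR by auto
    have "SI y g0 k P \<tau> (nd k g r)"
      unfolding SI_def
      apply (intro conjI)
      apply (fact si'(1))
      apply (fact si'(2))
      apply (fact si'(3))
      apply (fact si'(4))
      apply (fact ptree_next[OF si'(5) r])
      apply (fact si'(6))
      apply (fact si'(7))
      apply (fact conjunct2[OF edge_nodes[OF r]])
      using \<open>r \<in> Idx k\<close> g_def apply blast
      apply (fact si'(9))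
      apply (fact si'(10))
      done
    then show ?thesis by blast
  next
    case False
    define M' where "M' = Mset (insert \<tau> P) k g"
    obtain M where M: "M \<in> S k" "M' \<subseteq> M" using si'(6) k M'_def by blast
    have cnt: "card M' \<le> n^k - 1" unfolding M'_def g_def
    proof (rule count[of _ "{u}"])
      show "\<forall>\<rho>\<in>insert \<tau> P. ptree {u} \<rho>" using si'(2,5) ptree_mono by blast
      show "disj (insert \<tau> P)" by (fact si'(3))
      show "\<forall>w\<in>{u}. k < lev w" using i(2) by simp
      show "\<forall>\<rho>\<in>insert \<tau> P. y \<notin> tree_nodes \<rho>" by (fact si'(7))
      show "y = nd 0 g0 0" by (fact si'(9))
      show "g0 < n^t" by (fact si'(10))
      show "0 < k" "k < t" by (fact k)+
    qed
    have phiL: "\<phi> k i \<in> L k" using phi'[OF k] i by auto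
    obtain M'' where M'': "M'' \<in> S k" "matcher_ok (L k) (E k) (n^k) M' (\<phi> k i) M''"
    proof -
      have H: "\<And>M M' x. M \<in> S k \<Longrightarrow> M' \<subseteq> M \<Longrightarrow> card M' \<le> n^k - 1 \<Longrightarrow> x \<in> L k \<Longrightarrow>
          \<exists>M''\<in>S k. matcher_ok (L k) (E k) (n^k) M' x M''" using Sgame[OF k] by blast
      show ?thesis using H[OF M(1) M(2) cnt phiL] that by blast
    qed
    then obtain e where e: "e \<in> E k" "M'' = insert e M'" "\<phi> k i \<in> fst ` M''" "inj_on snd M''"
      unfolding matcher_ok_def by blast
    have notin: "\<phi> k i \<notin> fst ` M'"
    proof
      assume "\<phi> k i \<in> fst ` M'"
      then obtain pr where pr: "pr \<in> M'" "fst pr = \<phi> k i" by force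
      then obtain i' r' \<rho> where ir0: "pr = (\<phi> k i', r')" "\<rho> \<in> insert \<tau> P"
        "(nd (Suc k) (g div n) i', nd k g r') \<in> snd \<rho>"
        unfolding M'_def Mset_def by blast
      have ir: "\<phi> k i' = \<phi> k i" "\<rho> \<in> insert \<tau> P"
        "(nd (Suc k) (g div n) i', nd k g r') \<in> snd \<rho>" using ir0 pr by auto
      have "ptree {u} \<rho>" using ir(2) si'(2,5) ptree_mono by blast
      then have "i' \<in> Idx (Suc k)" using AA_edge[of k "g div n" i' g r'] tree_edge_AA ir(3) k by blast
      then have "i' = i" using phi'[OF k] i ir(1) by (auto dest: inj_onD)
      then have "u \<in> tree_nodes \<rho>" using ir(3) i edge_nodes by blast
      have dd: "\<forall>\<rho>1\<in>insert \<tau> P. \<forall>\<rho>2\<in>insert \<tau> P. \<rho>1 \<noteq> \<rho>2 \<longrightarrow> tree_nodes \<rho>1 \<inter> tree_nodes \<rho>2 = {}"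
        using si'(3) by (simp add: disj_def)
      have "\<rho> = \<tau>" using dd ir(2) si'(8) \<open>u \<in> tree_nodes \<rho>\<close> by blast
      then show False using False ir(3) i \<open>i' = i\<close> by blast
    qed
    have "fst e = \<phi> k i" using e(2,3) notin by auto
    then obtain r where er: "e = (\<phi> k i, r)" by (cases e) auto
    have rM: "r \<notin> snd ` M'"
    proof
      assume "r \<in> snd ` M'"
      then obtain a where a: "(a, r) \<in> M'" by force
      then have "(a, r) = e" using inj_onD[OF e(4), of "(a, r)" e] e(2) er by auto
      then show False using a er notin by force
    qed
    define v where "v = nd k g r"
    have rR: "r \<in> R k" using e(1) er ELR[OF k] by auto
    have "g < n^(t-k)" using div_bound si'(10) k g_def by simp
    then have uv: "(u, v) \<in> AA" unfolding v_def i(2)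
      using k i(1) e(1) er by (intro A1I) auto
    have vfresh: "\<forall>\<rho>\<in>insert \<tau> P. v \<notin> tree_nodes \<rho>"
    proof (intro ballI notI)
      fix \<rho> assume \<rho>: "\<rho> \<in> insert \<tau> P" "v \<in> tree_nodes \<rho>"
      have pt: "ptree {u} \<rho>" using \<rho>(1) si'(2,5) ptree_mono by blast
      obtain p where p: "(p, v) \<in> snd \<rho>" using nonroot_parent[OF pt \<rho>(2)] k v_def by auto
      obtain k1 g1 i1 where p1: "p = nd k1 g1 i1" using nd_surj by blast
      have "(p, v) \<in> AA" using tree_edge_AA[OF pt p] .
      then have "k1 = Suc k" using AA_E[OF \<open>(p, v) \<in> AA\<close>] p1 v_def by simp
      then have "g1 = g div n \<and> (\<phi> k i1, r) \<in> E k"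
        using AA_edge[of k g1 i1 g r] \<open>(p, v) \<in> AA\<close> p1 v_def k by blast
      then have "(\<phi> k i1, r) \<in> M'" unfolding M'_def Mset_def using \<rho>(1) p p1 v_def \<open>k1 = Suc k\<close> by blast
      then show False using rM by force
    qed
    define \<tau>' where "\<tau>' = (fst \<tau>, insert (u, v) (snd \<tau>))"
    have vt: "v \<notin> tree_nodes \<tau>" using vfresh by blast
    have ext: "ptree {v} \<tau>'" "tree_nodes \<tau>' = insert v (tree_nodes \<tau>)"
      using extend[OF si'(5) si'(8) uv vt] unfolding \<tau>'_def by blast+
    have dj: "disj (insert \<tau>' P) \<and> \<tau>' \<notin> P"
    proof -
      have f1: "fst \<tau>' = fst \<tau>" by (simp add: \<tau>'_def)
      have f2: "\<forall>\<rho>\<in>P. v \<notin> tree_nodes \<rho>" using vfresh by blast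
      show ?thesis using disj_extend[OF si'(3,4) f1 ext(2) f2] .
    qed
    have Msub: "Mset (insert \<tau>' P) k' g' \<subseteq>
        (if k' = k \<and> g' = g then insert (\<phi> k i, r) else id) (Mset (insert \<tau> P) k' g')" for k' g'
    proof
      fix p assume "p \<in> Mset (insert \<tau>' P) k' g'"
      then obtain i' r' \<rho> where ir: "p = (\<phi> k' i', r')" "\<rho> \<in> insert \<tau>' P"
        "(nd (Suc k') (g' div n) i', nd k' g' r') \<in> snd \<rho>" unfolding Mset_def by blast
      show "p \<in> (if k' = k \<and> g' = g then insert (\<phi> k i, r) else id) (Mset (insert \<tau> P) k' g')"
      proof (cases "\<rho> = \<tau>' \<and> (nd (Suc k') (g' div n) i', nd k' g' r') = (u, v)")
        case True
        then have e1: "nd (Suc k') (g' div n) i' = nd (Suc k) (g div n) i" "nd k' g' r' = nd k g r"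
          using i(2) v_def by simp_all
        then have "k' = k" "g' = g" "i' = i" "r' = r" by simp_all
        then show ?thesis using ir(1) by simp
      next
        case False
        then have "\<exists>\<rho>\<in>insert \<tau> P. (nd (Suc k') (g' div n) i', nd k' g' r') \<in> snd \<rho>"
        proof (cases "\<rho> = \<tau>'")
          case True
          then have "(nd (Suc k') (g' div n) i', nd k' g' r') \<in> snd \<tau>"
            using ir(3) False unfolding \<tau>'_def by auto
          then show ?thesis by blast
        next
          case False
          then show ?thesis using ir(2,3) by blast
        qed
        then have "p \<in> Mset (insert \<tau> P) k' g'" unfolding Mset_def using ir(1) by blast
        then show ?thesis by auto
      qed
    qed
    have Mok: "\<forall>k' g'. 0 < k' \<and> k' < t \<longrightarrow> (\<exists>M\<in>S k'. Mset (insert \<tau>' P) k' g' \<subseteq> M)"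
    proof (intro allI impI)
      fix k' g' assume kk: "0 < k' \<and> k' < t"
      show "\<exists>M\<in>S k'. Mset (insert \<tau>' P) k' g' \<subseteq> M"
      proof (cases "k' = k \<and> g' = g")
        case True
        then have "Mset (insert \<tau>' P) k' g' \<subseteq> M''" using Msub[of k' g'] e(2) er M'_def by auto
        then show ?thesis using M''(1) True by blast
      next
        case False
        then have "Mset (insert \<tau>' P) k' g' \<subseteq> Mset (insert \<tau> P) k' g'" using Msub[of k' g'] by (simp only: if_not_P[OF False] if_False id_apply)
        moreover obtain M0 where "M0 \<in> S k'" "Mset (insert \<tau> P) k' g' \<subseteq> M0" using si'(6) kk by blast
        ultimately show ?thesis by blast
      qed
    qed
    have yv: "y \<noteq> v" using si'(9) v_def k by simp
    have "SI y g0 k P \<tau>' v"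
      unfolding SI_def
      apply (intro conjI)
      apply (fact si'(1))
      apply (fact si'(2))
      apply (fact conjunct1[OF dj])
      apply (fact conjunct2[OF dj])
      apply (fact ext(1))
      apply (fact Mok)
      using si'(7) ext(2) yv apply blast
      using ext(2) apply blast
      using rR IdxR v_def g_def apply blast
      apply (fact si'(9))
      apply (fact si'(10))
      done
    moreover have "fst \<tau>' = fst \<tau>" "snd \<tau> \<subseteq> snd \<tau>'" unfolding \<tau>'_def by auto
    ultimately show ?thesis by blast
  qed
qed

lemma iter:
  "SI y g0 k P \<tau> u \<Longrightarrow> 0 < k \<Longrightarrow> k \<le> t \<Longrightarrow>
   \<exists>\<tau>' u'. SI y g0 1 P \<tau>' u' \<and> fst \<tau>' = fst \<tau> \<and> snd \<tau> \<subseteq> snd \<tau>'"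
proof (induction k arbitrary: \<tau> u)
  case 0 then show ?case by simp
next
  case (Suc k)
  show ?case
  proof (cases "k = 0")
    case True
    then show ?thesis using Suc.prems(1) by (intro exI[of _ \<tau>] exI[of _ u]) simp
  next
    case False
    then obtain \<tau>1 u1 where 1: "SI y g0 k P \<tau>1 u1" "fst \<tau>1 = fst \<tau>" "snd \<tau> \<subseteq> snd \<tau>1"
      using step[OF Suc.prems(1)] Suc.prems(3) by auto
    obtain \<tau>2 u2 where 2: "SI y g0 1 P \<tau>2 u2" "fst \<tau>2 = fst \<tau>1" "snd \<tau>1 \<subseteq> snd \<tau>2"
      using Suc.IH[OF 1(1)] False Suc.prems(3) by auto
    show ?thesis using 1 2 by (intro exI[of _ \<tau>2] exI[of _ u2]) auto
  qed
qed

definition Inv :: "(nat \<times> (nat \<times> nat) set) set \<Rightarrow> bool" where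
  "Inv F \<longleftrightarrow> valid_forest AA In Out F \<and> (\<forall>k g. 0 < k \<and> k < t \<longrightarrow> (\<exists>M\<in>S k. Mset F k g \<subseteq> M))"

lemma valid_forest_iff: "valid_forest AA In Out F \<longleftrightarrow> finite F \<and> (\<forall>\<rho>\<in>F. ptree {} \<rho>) \<and> disj F"
  by (simp add: valid_forest_def is_tree_ptree disj_def)

lemma final:
  assumes si: "SI y g0 1 P \<tau> u"
  shows "\<exists>\<tau>'. Inv (insert \<tau>' P) \<and> fst \<tau>' = fst \<tau> \<and> snd \<tau> \<subseteq> snd \<tau>' \<and> y \<in> tree_leaves \<tau>'"
proof -
  have si': "finite P" "\<forall>\<rho>\<in>P. ptree {} \<rho>" "disj (insert \<tau> P)" "\<tau> \<notin> P"
     "ptree {u} \<tau>" "\<forall>k' g. 0 < k' \<and> k' < t \<longrightarrow> (\<exists>M\<in>S k'. Mset (insert \<tau> P) k' g \<subseteq> M)"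
     "\<forall>\<rho>\<in>insert \<tau> P. y \<notin> tree_nodes \<rho>" "u \<in> tree_nodes \<tau>" "y = nd 0 g0 0" "g0 < n^t"
     "\<exists>i\<in>Idx 1. u = nd 1 (g0 div n^1) i"
    using si by (auto simp: SI_def)
  obtain i where i: "i \<in> Idx 1" "u = nd 1 (g0 div n) i" using si'(11) by auto
  have uy: "(u, y) \<in> AA" using A0I[OF si'(10) i(1)] i(2) si'(9) by simp
  have yt: "y \<notin> tree_nodes \<tau>" using si'(7) by blast
  define \<tau>' where "\<tau>' = (fst \<tau>, insert (u, y) (snd \<tau>))"
  have ext: "ptree {y} \<tau>'" "tree_nodes \<tau>' = insert y (tree_nodes \<tau>)"
    using extend[OF si'(5) si'(8) uy yt] unfolding \<tau>'_def by blast+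
  have yOut: "y \<in> Out" using si'(9,10) by (auto simp: Out_def)
  have pt: "ptree {} \<tau>'" using ptree_Out[OF ext(1)] yOut by blast
  have f1: "fst \<tau>' = fst \<tau>" by (simp add: \<tau>'_def)
  have f2: "\<forall>\<rho>\<in>P. y \<notin> tree_nodes \<rho>" using si'(7) by blast
  have dj: "disj (insert \<tau>' P) \<and> \<tau>' \<notin> P" using disj_extend[OF si'(3,4) f1 ext(2) f2] .
  have Msub: "0 < k \<Longrightarrow> Mset (insert \<tau>' P) k g \<subseteq> Mset (insert \<tau> P) k g" for k g
  proof -
    assume k0: "0 < k"
    show ?thesis
  proof
    fix p assume "p \<in> Mset (insert \<tau>' P) k g"
    then obtain i' r' \<rho> where ir: "p = (\<phi> k i', r')" "\<rho> \<in> insert \<tau>' P"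
      "(nd (Suc k) (g div n) i', nd k g r') \<in> snd \<rho>" unfolding Mset_def by blast
    have ne: "(nd (Suc k) (g div n) i', nd k g r') \<noteq> (u, y)" using si'(9) k0 by simp
    have "\<exists>\<rho>\<in>insert \<tau> P. (nd (Suc k) (g div n) i', nd k g r') \<in> snd \<rho>"
    proof (cases "\<rho> = \<tau>'")
      case True
      then have "(nd (Suc k) (g div n) i', nd k g r') \<in> snd \<tau>"
        using ir(3) ne unfolding \<tau>'_def by auto
      then show ?thesis by blast
    next
      case False
      then show ?thesis using ir(2,3) by blast
    qed
    then show "p \<in> Mset (insert \<tau> P) k g" unfolding Mset_def using ir(1) by blast
  qed
  qed
  have Mok: "\<forall>k g. 0 < k \<and> k < t \<longrightarrow> (\<exists>M\<in>S k. Mset (insert \<tau>' P) k g \<subseteq> M)"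
  proof (intro allI impI)
    fix k g assume kk: "0 < k \<and> k < t"
    then obtain M where "M \<in> S k" "Mset (insert \<tau> P) k g \<subseteq> M" using si'(6) by blast
    then show "\<exists>M\<in>S k. Mset (insert \<tau>' P) k g \<subseteq> M" using Msub[of k g] kk by blast
  qed
  have "Inv (insert \<tau>' P)"
    unfolding Inv_def valid_forest_iff using si'(1,2) pt dj Mok by simp
  moreover have "y \<in> tree_leaves \<tau>'"
  proof -
    have "y \<in> tree_nodes \<tau>'" using ext(2) by simp
    moreover have "\<not> (\<exists>w. (y, w) \<in> snd \<tau>')"
    proof
      assume "\<exists>w. (y, w) \<in> snd \<tau>'"
      then obtain w where "(y, w) \<in> AA" using tree_edge_AA[OF pt] by blast
      then show False using AA_E si'(9) by fastforce
    qed
    ultimately show ?thesis by (simp add: tree_leaves_def)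
  qed
  moreover have "fst \<tau>' = fst \<tau>" "snd \<tau> \<subseteq> snd \<tau>'" unfolding \<tau>'_def by auto
  ultimately show ?thesis by blast
qed

lemma Inv_sub: "Inv F \<Longrightarrow> F' \<subseteq> F \<Longrightarrow> Inv F'"
proof -
  assume a: "Inv F" "F' \<subseteq> F"
  have "Mset F' k g \<subseteq> Mset F k g" for k g using a(2) unfolding Mset_def by blast
  then show "Inv F'" using a unfolding Inv_def valid_forest_iff disj_def
    by (meson finite_subset order_trans subsetD)
qed

lemma not_in_tree:
  assumes "ptree W \<rho>" "x \<in> In" "fst \<rho> \<noteq> x"
  shows "x \<notin> tree_nodes \<rho>"
proof
  assume "x \<in> tree_nodes \<rho>"
  then have "\<exists>p. (p, x) \<in> snd \<rho>" using assms unfolding ptree_def by blast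
  then obtain p where "(p, x) \<in> AA" using tree_edge_AA[OF assms(1)] by blast
  then show False using AA_E lev_In[OF assms(2)] by fastforce
qed

lemma game:
  assumes inv: "Inv F" and rq: "requester_ok In Out F F' req"
  shows "\<exists>F''. Inv F'' \<and> connector_ok AA In Out F' req F''"
proof -
  have sub: "F' \<subseteq> F" using rq by (simp add: requester_ok_def)
  have inv': "Inv F'" using Inv_sub[OF inv sub] .
  have vf: "finite F'" "\<forall>\<rho>\<in>F'. ptree {} \<rho>" "disj F'"
    and Mk: "\<forall>k g. 0 < k \<and> k < t \<longrightarrow> (\<exists>M\<in>S k. Mset F' k g \<subseteq> M)"
    using inv' unfolding Inv_def valid_forest_iff by auto
  show ?thesis
  proof (cases req)
    case None
    have "connector_ok AA In Out F' req F'"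
      using inv' None unfolding connector_ok_def Inv_def by simp
    then show ?thesis using inv' by blast
  next
    case (Some xy)
    obtain x y where xy: "req = Some (x, y)" using Some by (cases xy) auto
    have req: "x \<in> In" "y \<in> Out" "\<forall>\<tau>\<in>F'. y \<notin> tree_nodes \<tau>"
      using rq xy unfolding requester_ok_def by auto
    obtain g0 where g0: "y = nd 0 g0 0" "g0 < n^t" using req(2) by (auto simp: Out_def)
    obtain i0 where i0: "x = nd t 0 i0" "i0 < n^t" using req(1) by (auto simp: In_def)
    have gdiv: "g0 div n^t = 0" using g0(2) by simp
    have xI: "\<exists>i\<in>Idx t. x = nd t (g0 div n^t) i" using i0 gdiv by (auto simp: Idx_def)
    have yx: "y \<noteq> x" using g0 i0 t_pos by simp
    show ?thesis
    proof (cases "\<exists>\<sigma>\<in>F'. fst \<sigma> = x")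
      case True
      then obtain \<sigma> where \<sigma>: "\<sigma> \<in> F'" "fst \<sigma> = x" by blast
      define P where "P = F' - {\<sigma>}"
      have ins: "insert \<sigma> P = F'" using \<sigma>(1) P_def by blast
      have "SI y g0 t P \<sigma> x"
        unfolding SI_def ins
        apply (intro conjI)
        using vf(1) P_def apply simp
        using vf(2) P_def apply blast
        apply (fact vf(3))
        using P_def apply blast
        using vf(2) \<sigma>(1) ptree_mono apply blast
        apply (fact Mk)
        apply (fact req(3))
        using root_node[of \<sigma>] \<sigma>(2) apply simp
        apply (fact xI)
        apply (fact g0(1))
        apply (fact g0(2))
        done
      from iter[OF this t_pos order_refl] obtain \<tau>1 u1 where
        1: "SI y g0 1 P \<tau>1 u1" "fst \<tau>1 = fst \<sigma>" "snd \<sigma> \<subseteq> snd \<tau>1" by blast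
      from final[OF 1(1)] obtain \<tau>' where
        2: "Inv (insert \<tau>' P)" "fst \<tau>' = fst \<tau>1" "snd \<tau>1 \<subseteq> snd \<tau>'" "y \<in> tree_leaves \<tau>'"
        by blast
      have "connector_ok AA In Out F' req (insert \<tau>' P)"
        unfolding connector_ok_def
      proof (intro conjI)
        show "insert \<tau>' P = F' \<or> (\<exists>\<tau>. insert \<tau>' P = insert \<tau> F') \<or>
          (\<exists>\<sigma>\<in>F'. \<exists>\<tau>. fst \<tau> = fst \<sigma> \<and> snd \<sigma> \<subseteq> snd \<tau> \<and> insert \<tau>' P = insert \<tau> (F' - {\<sigma>}))"
          apply (rule disjI2, rule disjI2)
          using \<sigma>(1) 1(2,3) 2(2,3) P_def by (intro bexI[of _ \<sigma>] exI[of _ \<tau>']) auto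
        show "valid_forest AA In Out (insert \<tau>' P)" using 2(1) by (simp add: Inv_def)
        show "\<forall>x' y'. req = Some (x', y') \<longrightarrow> (\<exists>\<tau>\<in>insert \<tau>' P. fst \<tau> = x' \<and> y' \<in> tree_leaves \<tau>)"
          using xy 1(2) 2(2,4) \<sigma>(2) by auto
      qed
      then show ?thesis using 2(1) by blast
    next
      case False
      define \<tau>0 where "\<tau>0 = (x, {} :: (nat \<times> nat) set)"
      have nodes0: "tree_nodes \<tau>0 = {x}" by (simp add: tree_nodes_def \<tau>0_def)
      have pt0: "ptree {x} \<tau>0"
        unfolding ptree_def using req(1) nodes0 by (auto simp: \<tau>0_def tree_leaves_def)
      have xfresh: "\<forall>\<rho>\<in>F'. x \<notin> tree_nodes \<rho>"
        using not_in_tree vf(2) req(1) False by blast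
      have dj: "disj (insert \<tau>0 F')"
        using vf(3) xfresh nodes0 unfolding disj_def by (simp add: Int_commute)
      have M0: "Mset (insert \<tau>0 F') k g = Mset F' k g" for k g
        unfolding Mset_def \<tau>0_def by auto
      have "SI y g0 t F' \<tau>0 x"
        unfolding SI_def
        apply (intro conjI)
        apply (fact vf(1))
        apply (fact vf(2))
        apply (fact dj)
        using False \<tau>0_def apply auto[1]
        apply (fact pt0)
        using Mk M0 apply simp
        using req(3) nodes0 yx apply simp
        using nodes0 apply simp
        apply (fact xI)
        apply (fact g0(1))
        apply (fact g0(2))
        done
      from iter[OF this t_pos order_refl] obtain \<tau>1 u1 where
        1: "SI y g0 1 F' \<tau>1 u1" "fst \<tau>1 = x" by (auto simp: \<tau>0_def)
      from final[OF 1(1)] obtain \<tau>' where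
        2: "Inv (insert \<tau>' F')" "fst \<tau>' = fst \<tau>1" "y \<in> tree_leaves \<tau>'"
        by blast
      have "connector_ok AA In Out F' req (insert \<tau>' F')"
        unfolding connector_ok_def
      proof (intro conjI)
        show "insert \<tau>' F' = F' \<or> (\<exists>\<tau>. insert \<tau>' F' = insert \<tau> F') \<or>
          (\<exists>\<sigma>\<in>F'. \<exists>\<tau>. fst \<tau> = fst \<sigma> \<and> snd \<sigma> \<subseteq> snd \<tau> \<and> insert \<tau>' F' = insert \<tau> (F' - {\<sigma>}))"
          by blast
        show "valid_forest AA In Out (insert \<tau>' F')" using 2(1) by (simp add: Inv_def)
        show "\<forall>x' y'. req = Some (x', y') \<longrightarrow> (\<exists>\<tau>\<in>insert \<tau>' F'. fst \<tau> = x' \<and> y' \<in> tree_leaves \<tau>)"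
          using xy 1(2) 2(2,3) by auto
      qed
      then show ?thesis using 2(1) by blast
    qed
  qed
qed

lemma wins: "connector_wins AA In Out"
  unfolding connector_wins_def
proof (intro exI[of _ "Collect Inv"] conjI ballI allI impI)
  show "{} \<in> Collect Inv"
    using Sgame unfolding Inv_def valid_forest_def by (auto simp: Mset_def)
next
  fix F F' req assume "F \<in> Collect Inv" "requester_ok In Out F F' req"
  then show "\<exists>F''\<in>Collect Inv. connector_ok AA In Out F' req F''" using game by blast
qed

lemma finIdx: "0 < k \<Longrightarrow> k \<le> t \<Longrightarrow> finite (Idx k)"
  using finR[of k] by (auto simp: Idx_def)

lemma cardIdx': "0 < k \<Longrightarrow> k \<le> t \<Longrightarrow> real (card (Idx k)) \<le> C * real n ^ k"
  using cardIdx[of k] by (simp add: Idx_def)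

definition Lay :: "nat \<Rightarrow> (nat \<times> nat) set" where
  "Lay k = (\<Union>g\<in>{..<n^(t-k)}. \<Union>i\<in>Idx (Suc k).
      (\<lambda>r. (nd (Suc k) (g div n) i, nd k g r)) ` {r. (\<phi> k i, r) \<in> E k})"

lemma A1_sub: "A1 \<subseteq> (\<Union>k\<in>{1..<t}. Lay k)"
proof
  fix p assume "p \<in> A1"
  then obtain k g i r where p: "p = (nd (Suc k) (g div n) i, nd k g r)" "0 < k" "k < t" "g < n^(t-k)"
    "i \<in> Idx (Suc k)" "(\<phi> k i, r) \<in> E k" unfolding A1_def by blast
  have "p \<in> Lay k" unfolding Lay_def using p by blast
  then show "p \<in> (\<Union>k\<in>{1..<t}. Lay k)" using p(2,3) by auto
qed

lemma Lay_card:
  assumes k: "0 < k" "k < t"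
  shows "finite (Lay k) \<and> real (card (Lay k)) \<le> C * D * real n ^ (t + 1)"
proof -
  have fr: "finite {r. (\<phi> k i, r) \<in> E k}" for i
    using ELR[OF k] finR[OF k] by (rule_tac finite_subset[of _ "R k"]) auto
  have fI: "finite (Idx (Suc k))" using finIdx[of "Suc k"] k by simp
  have D0: "D \<ge> 0" using D1 by simp
  have inner: "real (card ((\<lambda>r. (nd (Suc k) (g div n) i, nd k g r)) ` {r. (\<phi> k i, r) \<in> E k})) \<le> D"
    if "i \<in> Idx (Suc k)" for g i
  proof -
    have "\<phi> k i \<in> L k" using phi'[OF k] that by auto
    then have "real (card {r. (\<phi> k i, r) \<in> E k}) \<le> D" using deg[OF k] by blast
    moreover have "card ((\<lambda>r. (nd (Suc k) (g div n) i, nd k g r)) ` {r. (\<phi> k i, r) \<in> E k})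
        \<le> card {r. (\<phi> k i, r) \<in> E k}" by (rule card_image_le[OF fr])
    ultimately show ?thesis by linarith
  qed
  have mid: "real (card (\<Union>i\<in>Idx (Suc k). (\<lambda>r. (nd (Suc k) (g div n) i, nd k g r)) ` {r. (\<phi> k i, r) \<in> E k}))
      \<le> C * real n ^ Suc k * D" for g
  proof -
    have "real (card (\<Union>i\<in>Idx (Suc k). (\<lambda>r. (nd (Suc k) (g div n) i, nd k g r)) ` {r. (\<phi> k i, r) \<in> E k}))
      \<le> real (card (Idx (Suc k))) * D" by (rule card_UN_bound[OF fI inner])
    also have "\<dots> \<le> C * real n ^ Suc k * D"
      using cardIdx'[of "Suc k"] k D0 by (intro mult_right_mono) auto
    finally show ?thesis .
  qed
  have "real (card (Lay k)) \<le> real (card {..<n^(t-k)}) * (C * real n ^ Suc k * D)"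
    unfolding Lay_def by (rule card_UN_bound) (use mid in auto)
  also have "\<dots> = C * D * (real n ^ (t - k) * real n ^ Suc k)" by simp
  also have "real n ^ (t - k) * real n ^ Suc k = real n ^ (t + 1)"
    using k by (simp add: power_add[symmetric])
  finally have c: "real (card (Lay k)) \<le> C * D * real n ^ (t + 1)" .
  have "finite (Lay k)" unfolding Lay_def using fI fr by (intro finite_UN_I finite_imageI) auto
  with c show ?thesis by blast
qed

definition Lay0 :: "(nat \<times> nat) set" where
  "Lay0 = (\<Union>g\<in>{..<n^t}. (\<lambda>i. (nd 1 (g div n) i, nd 0 g 0)) ` Idx 1)"

lemma A0_sub: "A0 \<subseteq> Lay0"
proof
  fix p assume "p \<in> A0"
  then obtain g i where p: "p = (nd 1 (g div n) i, nd 0 g 0)" "g < n^t" "i \<in> Idx 1"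
    unfolding A0_def by blast
  then show "p \<in> Lay0" unfolding Lay0_def by blast
qed

lemma Lay0_card: "finite Lay0 \<and> real (card Lay0) \<le> C * real n ^ (t + 1)"
proof -
  have fI: "finite (Idx 1)" using finIdx[of 1] t_pos by simp
  have "real (card Lay0) \<le> real (card {..<n^t}) * (C * real n ^ 1)"
    unfolding Lay0_def
  proof (rule card_UN_bound)
    fix g show "real (card ((\<lambda>i. (nd 1 (g div n) i, nd 0 g 0)) ` Idx 1)) \<le> C * real n ^ 1"
    proof -
      have "card ((\<lambda>i. (nd 1 (g div n) i, nd 0 g 0)) ` Idx 1) \<le> card (Idx 1)"
        by (rule card_image_le[OF fI])
      then have "real (card ((\<lambda>i. (nd 1 (g div n) i, nd 0 g 0)) ` Idx 1)) \<le> real (card (Idx 1))"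
        by (simp only: of_nat_le_iff)
      moreover have "real (card (Idx 1)) \<le> C * real n ^ 1" using cardIdx'[of 1] t_pos by simp
      ultimately show ?thesis by linarith
    qed
  qed simp
  also have "\<dots> = C * real n ^ (t + 1)" by (simp add: power_add)
  finally show ?thesis unfolding Lay0_def using fI by simp
qed

lemma AA_fin_card: "finite AA \<and> real (card AA) \<le> real t * C * D * real n ^ (t + 1)"
proof -
  have fU: "finite (\<Union>k\<in>{1..<t}. Lay k)" using Lay_card by auto
  have cU: "real (card (\<Union>k\<in>{1..<t}. Lay k)) \<le> real (card {1..<t}) * (C * D * real n ^ (t + 1))"
    by (rule card_UN_bound) (use Lay_card in auto)
  have f1: "finite A1" using A1_sub fU finite_subset by blast
  have c1: "real (card A1) \<le> real (t - 1) * (C * D * real n ^ (t + 1))"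
    using card_mono[OF fU A1_sub] cU by simp
  have f0: "finite A0" using A0_sub Lay0_card finite_subset by blast
  have c0: "real (card A0) \<le> C * real n ^ (t + 1)"
  proof -
    have "card A0 \<le> card Lay0" using card_mono[OF _ A0_sub] Lay0_card by blast
    then have "real (card A0) \<le> real (card Lay0)" by (simp only: of_nat_le_iff)
    then show ?thesis using Lay0_card by linarith
  qed
  have "real (card AA) \<le> real (card A1) + real (card A0)"
    unfolding AA_def using card_Un_le[of A1 A0] by linarith
  also have "\<dots> \<le> real (t - 1) * (C * D * real n ^ (t + 1)) + C * real n ^ (t + 1)"
    using c1 c0 by linarith
  also have "\<dots> \<le> real (t - 1) * (C * D * real n ^ (t + 1)) + C * D * real n ^ (t + 1)"
  proof -
    have h: "C * real n ^ (t + 1) \<le> C * real n ^ (t + 1) * D"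
      using mult_left_mono[of 1 D "C * real n ^ (t + 1)"] C1 D1 by simp
    have X: "C * D * real n ^ (t + 1) = (C * real n ^ (t + 1)) * D" by (simp add: mult_ac)
    show ?thesis unfolding X using h by linarith
  qed
  also have "\<dots> = real t * C * D * real n ^ (t + 1)"
    using t_pos by (simp add: of_nat_diff algebra_simps)
  finally show ?thesis using f1 f0 by (simp add: AA_def)
qed

lemma card_In: "card In = n^t"
  unfolding In_def by (subst card_image) (auto simp: inj_on_def)

lemma card_Out: "card Out = n^t"
  unfolding Out_def by (subst card_image) (auto simp: inj_on_def)

lemma depth_t: "depth AA In Out = t"
proof -
  have Inv0: "Inv {}"
    using Sgame unfolding Inv_def valid_forest_def by (auto simp: Mset_def)
  define x0 where "x0 = nd t 0 0"
  define y0 where "y0 = nd 0 0 0"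
  have x0: "x0 \<in> In" using n_pos by (auto simp: In_def x0_def)
  have y0: "y0 \<in> Out" using n_pos by (auto simp: Out_def y0_def)
  have "requester_ok In Out {} {} (Some (x0, y0))"
    using x0 y0 by (simp add: requester_ok_def)
  then obtain F'' where F'': "Inv F''" "connector_ok AA In Out {} (Some (x0, y0)) F''"
    using game[OF Inv0] by blast
  then obtain \<tau> where \<tau>: "\<tau> \<in> F''" "fst \<tau> = x0" "y0 \<in> tree_leaves \<tau>"
    unfolding connector_ok_def by blast
  have pt: "ptree {} \<tau>" using F''(1) \<tau>(1) unfolding Inv_def valid_forest_iff by blast
  have "(x0, y0) \<in> (snd \<tau>)\<^sup>*" using pt \<tau>(2,3) unfolding ptree_def tree_leaves_def by auto
  moreover have "snd \<tau> \<subseteq> AA" using pt by (simp add: ptree_def)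
  ultimately have "(x0, y0) \<in> AA\<^sup>*" using rtrancl_mono by blast
  then obtain m where m: "(x0, y0) \<in> AA ^^ m" by (auto simp: rtrancl_power)
  then have "m = t" using AA_pow[OF m] by (simp add: x0_def y0_def)
  have "{k. \<exists>x\<in>In. \<exists>y\<in>Out. (x, y) \<in> AA ^^ k} = {t}"
  proof
    show "{k. \<exists>x\<in>In. \<exists>y\<in>Out. (x, y) \<in> AA ^^ k} \<subseteq> {t}"
    proof
      fix k assume "k \<in> {k. \<exists>x\<in>In. \<exists>y\<in>Out. (x, y) \<in> AA ^^ k}"
      then obtain x y where "x \<in> In" "y \<in> Out" "(x, y) \<in> AA ^^ k" by blast
      then have "lev x = lev y + k" "lev x = t" "lev y = 0"
        using AA_pow[of x y k] lev_In[of x] lev_Out[of y] by auto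
      then show "k \<in> {t}" by simp
    qed
    show "{t} \<subseteq> {k. \<exists>x\<in>In. \<exists>y\<in>Out. (x, y) \<in> AA ^^ k}"
      using x0 y0 m \<open>m = t\<close> by blast
  qed
  then show ?thesis by (simp add: depth_def)
qed

lemma result:
  "\<exists>V A Ii Oo. connector (n ^ t) V A Ii Oo \<and> depth A Ii Oo = t \<and>
           real (card A) \<le> real t * C * D * real (n ^ (t + 1))"
proof (intro exI conjI)
  let ?V = "In \<union> Out \<union> fst ` AA \<union> snd ` AA"
  show "connector (n ^ t) ?V AA In Out"
    unfolding connector_def network_def
  proof (intro conjI)
    show "finite ?V" using AA_fin_card by (simp add: In_def Out_def)
    show "AA \<subseteq> ?V \<times> ?V"
    proof
      fix p assume "p \<in> AA"
      then have "fst p \<in> fst ` AA" "snd p \<in> snd ` AA" by auto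
      then show "p \<in> ?V \<times> ?V" by (cases p) auto
    qed
    show "acyclic AA" by (rule acyc)
    show "In \<subseteq> ?V" by blast
    show "Out \<subseteq> ?V" by blast
    show "card In = n^t" by (rule card_In)
    show "card Out = n^t" by (rule card_Out)
    show "connector_wins AA In Out" by (rule wins)
  qed
  show "depth AA In Out = t" by (rule depth_t)
  show "real (card AA) \<le> real t * C * D * real (n ^ (t + 1))"
    using AA_fin_card by simp
qed

end


theorem mainTheorem13:
  fixes n t :: nat and C D :: real
  assumes "n > 0" and "t > 0" and "C > 0"
    and "\<forall>c<t. \<exists>L R E. bipartite L R E \<and>
            real (card L) = C * real (n ^ (c + 1)) \<and>
            real (card R) \<le> C * real (n ^ c) \<and>
            left_degree_le L E D \<and>
            dynamic_matching L R E (n ^ c)"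
  shows "\<exists>V A In Out. connector (n ^ t) V A In Out \<and> depth A In Out = t \<and>
           real (card A) \<le> real t * C * D * real (n ^ (t + 1))"
proof -
  define P where "P c L R E \<longleftrightarrow> bipartite L R E \<and>
            real (card L) = C * real (n ^ (c + 1)) \<and>
            real (card R) \<le> C * real (n ^ c) \<and>
            left_degree_le L E D \<and>
            dynamic_matching L R E (n ^ c)" for c L R E
  have "\<forall>c. \<exists>LRE. c < t \<longrightarrow> P c (fst LRE) (fst (snd LRE)) (snd (snd LRE))"
  proof
    fix c show "\<exists>LRE. c < t \<longrightarrow> P c (fst LRE) (fst (snd LRE)) (snd (snd LRE))"
    proof (cases "c < t")
      case True
      then obtain L R E where "P c L R E" using assms(4) unfolding P_def by blast
      then show ?thesis by (intro exI[of _ "(L, R, E)"]) simp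
    qed simp
  qed
  from choice[OF this] obtain f where f0: "\<forall>c. c < t \<longrightarrow> P c (fst (f c)) (fst (snd (f c))) (snd (snd (f c)))"
    by blast
  have f: "\<And>c. c < t \<Longrightarrow> P c (fst (f c)) (fst (snd (f c))) (snd (snd (f c)))" using f0 by blast
  define LL where "LL c = fst (f c)" for c
  define RR where "RR c = fst (snd (f c))" for c
  define EE where "EE c = snd (snd (f c))" for c
  have Pc: "c < t \<Longrightarrow> P c (LL c) (RR c) (EE c)" for c using f LL_def RR_def EE_def by simp
  have bip: "c < t \<Longrightarrow> finite (LL c) \<and> finite (RR c) \<and> EE c \<subseteq> LL c \<times> RR c" for c
    using Pc by (simp add: P_def bipartite_def)
  have cL: "c < t \<Longrightarrow> real (card (LL c)) = C * real n ^ (c + 1)" for c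
    using Pc by (simp add: P_def)
  have cR: "c < t \<Longrightarrow> real (card (RR c)) \<le> C * real n ^ c" for c
    using Pc by (simp add: P_def)
  have dg: "c < t \<Longrightarrow> left_degree_le (LL c) (EE c) D" for c
    using Pc by (simp add: P_def)
  have dm: "c < t \<Longrightarrow> dynamic_matching (LL c) (RR c) (EE c) (n ^ c)" for c
    using Pc by (simp add: P_def)
  have "\<forall>c. \<exists>S. c < t \<longrightarrow> ({} \<in> S \<and>
        (\<forall>M\<in>S. \<forall>M' x. M' \<subseteq> M \<and> card M' \<le> n ^ c - 1 \<and> x \<in> LL c \<longrightarrow>
            (\<exists>M''\<in>S. matcher_ok (LL c) (EE c) (n ^ c) M' x M'')))"
  proof
    fix c show "\<exists>S. c < t \<longrightarrow> ({} \<in> S \<and>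
        (\<forall>M\<in>S. \<forall>M' x. M' \<subseteq> M \<and> card M' \<le> n ^ c - 1 \<and> x \<in> LL c \<longrightarrow>
            (\<exists>M''\<in>S. matcher_ok (LL c) (EE c) (n ^ c) M' x M'')))"
    proof (cases "c < t")
      case True
      then show ?thesis using dm[OF True] unfolding dynamic_matching_def by blast
    qed simp
  qed
  from choice[OF this] obtain SS where SS0: "\<forall>c. c < t \<longrightarrow> {} \<in> SS c \<and>
        (\<forall>M\<in>SS c. \<forall>M' x. M' \<subseteq> M \<and> card M' \<le> n ^ c - 1 \<and> x \<in> LL c \<longrightarrow>
            (\<exists>M''\<in>SS c. matcher_ok (LL c) (EE c) (n ^ c) M' x M''))"
    by blast
  have SS: "\<And>c. c < t \<Longrightarrow> {} \<in> SS c \<and>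
        (\<forall>M\<in>SS c. \<forall>M' x. M' \<subseteq> M \<and> card M' \<le> n ^ c - 1 \<and> x \<in> LL c \<longrightarrow>
            (\<exists>M''\<in>SS c. matcher_ok (LL c) (EE c) (n ^ c) M' x M''))"
    using SS0 by blast
  \<comment> \<open>C and D are at least 1, using the graph for c = 0\<close>
  have b0: "finite (LL 0)" "finite (RR 0)" "EE 0 \<subseteq> LL 0 \<times> RR 0" using bip[of 0] assms(2) by auto
  have "real (card (LL 0)) = C * real n" using cL[of 0] assms(2) by simp
  moreover have "C * real n > 0" using assms(1,3) by simp
  ultimately have "real (card (LL 0)) > 0" by simp
  then have "card (LL 0) > 0" by simp
  then have "LL 0 \<noteq> {}" by auto
  then obtain x0 where x0: "x0 \<in> LL 0" by blast
  have S0: "{} \<in> SS 0" "\<forall>M\<in>SS 0. \<forall>M' x. M' \<subseteq> M \<and> card M' \<le> n ^ 0 - 1 \<and> x \<in> LL 0 \<longrightarrow>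
            (\<exists>M''\<in>SS 0. matcher_ok (LL 0) (EE 0) (n ^ 0) M' x M'')" using SS[of 0] assms(2) by auto
  have "\<exists>M''\<in>SS 0. matcher_ok (LL 0) (EE 0) (n ^ 0) {} x0 M''"
    using bspec[OF S0(2) S0(1)] x0 by simp
  then obtain M'' where "M'' \<in> SS 0" "matcher_ok (LL 0) (EE 0) (n ^ 0) {} x0 M''" by blast
  then obtain e where e: "e \<in> EE 0" "x0 \<in> fst ` insert e {}" unfolding matcher_ok_def by blast
  then obtain r0 where r0: "(x0, r0) \<in> EE 0" by (cases e) auto
  have "r0 \<in> RR 0" using r0 b0(3) by auto
  then have "0 < card (RR 0)" using b0(2) card_gt_0_iff by blast
  then have "card (RR 0) \<ge> 1" by simp
  then have C1: "C \<ge> 1" using cR[of 0] assms(2) by simp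
  have fin0: "finite {r. (x0, r) \<in> EE 0}" using b0 by (rule_tac finite_subset[of _ "RR 0"]) auto
  have "r0 \<in> {r. (x0, r) \<in> EE 0}" using r0 by simp
  then have "0 < card {r. (x0, r) \<in> EE 0}" using fin0 card_gt_0_iff by blast
  then have "card {r. (x0, r) \<in> EE 0} \<ge> 1" by simp
  moreover have "real (card {r. (x0, r) \<in> EE 0}) \<le> D" using dg[of 0] assms(2) x0
    by (simp add: left_degree_le_def)
  ultimately have D1: "D \<ge> 1" by linarith
  define Ix where "Ix k = (if k = t then {..<n^t} else RR k)" for k
  have cIx: "real (card (Ix k)) \<le> C * real n ^ k" if "0 < k" "k \<le> t" for k
  proof (cases "k = t")
    case True
    have "real (card (Ix k)) = 1 * real n ^ t" using True by (simp add: Ix_def)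
    also have "\<dots> \<le> C * real n ^ t" using C1 by (intro mult_right_mono) auto
    finally show ?thesis using True by simp
  next
    case False
    then show ?thesis using cR[of k] that by (simp add: Ix_def)
  qed
  have "\<forall>k. \<exists>g. 0 < k \<and> k < t \<longrightarrow> inj_on g (Ix (Suc k)) \<and> g ` Ix (Suc k) \<subseteq> LL k"
  proof
    fix k show "\<exists>g. 0 < k \<and> k < t \<longrightarrow> inj_on g (Ix (Suc k)) \<and> g ` Ix (Suc k) \<subseteq> LL k"
    proof (cases "0 < k \<and> k < t")
      case True
      have fI: "finite (Ix (Suc k))"
      proof (cases "Suc k = t")
        case True then show ?thesis by (simp add: Ix_def)
      next
        case False
        then have "Suc k < t" using \<open>0 < k \<and> k < t\<close> by simp
        then show ?thesis using bip[of "Suc k"] False by (simp add: Ix_def)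
      qed
      have fL: "finite (LL k)" using bip[of k] True by simp
      have c1: "real (card (Ix (Suc k))) \<le> C * real n ^ Suc k" using cIx[of "Suc k"] True by simp
      have c2: "real (card (LL k)) = C * real n ^ Suc k" using cL[of k] True by simp
      have "real (card (Ix (Suc k))) \<le> real (card (LL k))" using c1 c2 by linarith
      then have cc: "card (Ix (Suc k)) \<le> card (LL k)" by (simp only: of_nat_le_iff)
      obtain g where "g ` Ix (Suc k) \<subseteq> LL k" "inj_on g (Ix (Suc k))"
        using card_le_inj[OF fI fL cc] by blast
      then show ?thesis by blast
    next
      case False
      then show ?thesis by (intro exI[of _ id]) blast
    qed
  qed
  from choice[OF this] obtain \<phi> where \<phi>0: "\<forall>k. 0 < k \<and> k < t \<longrightarrow> inj_on (\<phi> k) (Ix (Suc k)) \<and> \<phi> k ` Ix (Suc k) \<subseteq> LL k"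
    by blast
  have \<phi>: "\<And>k. 0 < k \<Longrightarrow> k < t \<Longrightarrow> inj_on (\<phi> k) (Ix (Suc k)) \<and> \<phi> k ` Ix (Suc k) \<subseteq> LL k"
    using \<phi>0 by blast
  interpret conn n t C D LL RR EE SS \<phi>
  proof
    show "0 < n" "0 < t" "1 \<le> C" "1 \<le> D" by (fact assms(1) assms(2) C1 D1)+
    show "\<And>k. 0 < k \<Longrightarrow> k < t \<Longrightarrow> finite (LL k)" using bip by blast
    show "\<And>k. 0 < k \<Longrightarrow> k < t \<Longrightarrow> finite (RR k)" using bip by blast
    show "\<And>k. 0 < k \<Longrightarrow> k < t \<Longrightarrow> EE k \<subseteq> LL k \<times> RR k" using bip by blast
    show "\<And>k a. 0 < k \<Longrightarrow> k < t \<Longrightarrow> a \<in> LL k \<Longrightarrow> real (card {r. (a, r) \<in> EE k}) \<le> D"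
      using dg by (simp add: left_degree_le_def)
    show "\<And>k. 0 < k \<Longrightarrow> k \<le> t \<Longrightarrow>
        real (card (if k = t then {..<n^t} else RR k)) \<le> C * real n ^ k"
      using cIx by (simp add: Ix_def)
    show "\<And>k. 0 < k \<Longrightarrow> k < t \<Longrightarrow>
        inj_on (\<phi> k) (if Suc k = t then {..<n^t} else RR (Suc k)) \<and>
        \<phi> k ` (if Suc k = t then {..<n^t} else RR (Suc k)) \<subseteq> LL k"
      using \<phi> by (simp add: Ix_def)
    show "\<And>k. 0 < k \<Longrightarrow> k < t \<Longrightarrow> {} \<in> SS k \<and>
        (\<forall>M\<in>SS k. \<forall>M' x. M' \<subseteq> M \<and> card M' \<le> n^k - 1 \<and> x \<in> LL k \<longrightarrow>
            (\<exists>M''\<in>SS k. matcher_ok (LL k) (EE k) (n^k) M' x M''))"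
      using SS by blast
  qed
  show ?thesis using result .
qed

end
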